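(* Let $p\ge4$ be an even integer. If $G$ is a nonempty graph on $v$ vertices with $e$ edges containing no circuit of length $p$, then $$e\le 18\pi^2p^2\,v^{1+2/p}.$$ If moreover $G$ is bipartite with vertex classes of sizes $m$ and $n$, then $$e\le 9\pi^2p^2\min(m,n)^{2/p}\max(m,n).$$
   Context: Graphs are finite simple graphs. A circuit of length $p$ in a graph is a sequence $(v_1,\dots,v_p)$ of vertices such that $\{v_1,v_2\},\dots,\{v_{p-1},v_p\},\{v_p,v_1\}$ are pairwise distinct edges of the graph (the vertices need not be pairwise distinct). *)

theory Defs
  imports Complex_Main
begin

definition simple_graph :: "'a set \<Rightarrow> 'a set set \<Rightarrow> bool" where
  "simple_graph V E \<longleftrightarrow> finite V \<and> (\<forall>e\<in>E. e \<subseteq> V \<and> card e = 2)"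

definition is_circuit :: "'a set set \<Rightarrow> nat \<Rightarrow> (nat \<Rightarrow> 'a) \<Rightarrow> bool" where
  "is_circuit E p c \<longleftrightarrow>
     (\<forall>i<p. {c i, c (Suc i mod p)} \<in> E) \<and>
     inj_on (\<lambda>i. {c i, c (Suc i mod p)}) {0..<p}"

definition has_circuit_of_length :: "'a set set \<Rightarrow> nat \<Rightarrow> bool" where
  "has_circuit_of_length E p \<longleftrightarrow> (\<exists>c. is_circuit E p c)"

definition bipartition :: "'a set \<Rightarrow> 'a set set \<Rightarrow> 'a set \<Rightarrow> 'a set \<Rightarrow> bool" where
  "bipartition V E A B \<longleftrightarrow> A \<union> B = V \<and> A \<inter> B = {} \<and>
     (\<forall>e\<in>E. \<exists>a\<in>A. \<exists>b\<in>B. e = {a, b})"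

end

theory Submission
  imports Defs
begin

definition nbr :: "'a set set \<Rightarrow> 'a set \<Rightarrow> 'a \<Rightarrow> 'a set" where
  "nbr F W x = {w\<in>W. {x,w} \<in> F}"

definition edges_in :: "'a set set \<Rightarrow> 'a set \<Rightarrow> 'a set set" where
  "edges_in F W = {e\<in>F. e \<subseteq> W}"

lemma edges_in_finite: "finite W \<Longrightarrow> finite (edges_in F W)"
  unfolding edges_in_def by (rule finite_subset[of _ "Pow W"]) auto

lemma extract_sub:
  assumes "finite W" "\<forall>e\<in>F. card e = 2" "(d - 1) * card W < card (edges_in F W)"
  shows "\<exists>W'\<subseteq>W. W' \<noteq> {} \<and> (\<forall>x\<in>W'. d \<le> card (nbr F W' x))"
  using assms(1,3)
proof (induction W rule: finite_psubset_induct)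
  case (psubset W)
  show ?case
  proof (cases "\<forall>x\<in>W. d \<le> card (nbr F W x)")
    case True
    have "W \<noteq> {}"
    proof
      assume "W = {}"
      then have "edges_in F W = {}" using assms(2) unfolding edges_in_def
        by (metis (no_types, lifting) Collect_empty_eq card.empty subset_empty zero_neq_numeral)
      then show False using psubset.prems by simp
    qed
    then show ?thesis using True by blast
  next
    case False
    then obtain x where x: "x \<in> W" "card (nbr F W x) < d" by (auto simp: not_le)
    define W' where "W' = W - {x}"
    have sub: "{e \<in> edges_in F W. x \<in> e} \<subseteq> (\<lambda>w. {x,w}) ` nbr F W x"
    proof
      fix e assume "e \<in> {e \<in> edges_in F W. x \<in> e}"
      then have e: "e \<in> F" "e \<subseteq> W" "x \<in> e" unfolding edges_in_def by auto
      then have "card e = 2" using assms(2) by auto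
      then obtain a b where ab: "e = {a,b}" "a \<noteq> b" by (auto simp: card_2_iff)
      then have "\<exists>w. e = {x,w}" using e(3) by auto
      then obtain w where "e = {x,w}" by blast
      then show "e \<in> (\<lambda>w. {x,w}) ` nbr F W x" using e unfolding nbr_def by auto
    qed
    have fin: "finite (nbr F W x)" using psubset.hyps unfolding nbr_def by auto
    have c1: "card {e \<in> edges_in F W. x \<in> e} \<le> card (nbr F W x)"
      using card_image_le[OF fin, of "\<lambda>w. {x,w}"] card_mono[OF finite_imageI[OF fin] sub] by linarith
    have eq: "edges_in F W' = edges_in F W - {e \<in> edges_in F W. x \<in> e}"
      unfolding W'_def edges_in_def by auto
    have fe: "finite (edges_in F W)" using edges_in_finite psubset.hyps by auto
    have c2: "card (edges_in F W') = card (edges_in F W) - card {e \<in> edges_in F W. x \<in> e}"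
      unfolding eq by (rule card_Diff_subset) (use fe in auto)
    have cW: "card W = Suc (card W')" unfolding W'_def
      using card_Suc_Diff1[OF psubset.hyps x(1)] by simp
    have lt: "(d - 1) * card W' < card (edges_in F W')"
    proof -
      have "(d - 1) * card W = (d - 1) * card W' + (d - 1)" using cW by simp
      moreover have "card {e \<in> edges_in F W. x \<in> e} \<le> d - 1" using c1 x(2) by linarith
      ultimately show ?thesis using psubset.prems c2 by linarith
    qed
    have ps: "W' \<subset> W" unfolding W'_def using x by auto
    obtain W'' where "W'' \<subseteq> W'" "W'' \<noteq> {}" "\<forall>x\<in>W''. d \<le> card (nbr F W'' x)"
      using psubset.IH[OF ps lt] by blast
    then show ?thesis unfolding W'_def by blast
  qed
qed

lemma circuit_mono: "has_circuit_of_length H p \<Longrightarrow> H \<subseteq> E \<Longrightarrow> has_circuit_of_length E p"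
  unfolding has_circuit_of_length_def is_circuit_def by (metis subsetD)

lemma cycle_circuit:
  assumes "distinct cs" "length cs = p" "p \<ge> 3"
    and "successively (\<lambda>u w. {u,w} \<in> F) (cs @ [hd cs])"
  shows "has_circuit_of_length F p"
proof -
  define c where "c = (\<lambda>j. cs ! j)"
  have nxt: "c (Suc j mod p) = (cs @ [hd cs]) ! Suc j" if "j < p" for j
  proof (cases "Suc j < p")
    case True then show ?thesis unfolding c_def by (simp add: nth_append assms(2))
  next
    case False
    then have "Suc j = p" using that by auto
    moreover have "cs \<noteq> []" using assms(2,3) by auto
    ultimately show ?thesis unfolding c_def using assms(2) by (simp add: nth_append hd_conv_nth)
  qed
  have edge: "{c j, c (Suc j mod p)} \<in> F" if "j < p" for j
  proof -
    have "c j = (cs @ [hd cs]) ! j" unfolding c_def using that assms(2) by (simp add: nth_append)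
    then show ?thesis using nxt[OF that] successively_nth[OF assms(4), of j] that assms(2) by simp
  qed
  have injc: "c j = c j' \<Longrightarrow> j < p \<Longrightarrow> j' < p \<Longrightarrow> j = j'" for j j'
    unfolding c_def using assms(1,2) by (simp add: nth_eq_iff_index_eq)
  have "inj_on (\<lambda>i. {c i, c (Suc i mod p)}) {0..<p}"
  proof (rule inj_onI)
    fix j j' assume j: "j \<in> {0..<p}" "j' \<in> {0..<p}" and eq: "{c j, c (Suc j mod p)} = {c j', c (Suc j' mod p)}"
    show "j = j'"
    proof (rule ccontr)
      assume ne: "j \<noteq> j'"
      have m1: "Suc j mod p < p" "Suc j' mod p < p" using assms(3) by auto
      have "c j \<noteq> c j'" using injc[of j j'] ne j by auto
      then have "c j = c (Suc j' mod p) \<and> c (Suc j mod p) = c j'" using eq by (auto simp: doubleton_eq_iff)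
      then have h1: "c j = c (Suc j' mod p)" and h2: "c (Suc j mod p) = c j'" by auto
      have jl: "j < p" "j' < p" using j by auto
      have "j = Suc j' mod p" using injc[OF h1 jl(1) m1(2)] .
      moreover have "Suc j mod p = j'" using injc[OF h2 m1(1) jl(2)] .
      ultimately have "j = Suc j' mod p" "Suc j mod p = j'" by auto
      then show False
      proof (cases "Suc j' < p")
        case True
        then have jj: "j = Suc j'" using \<open>j = Suc j' mod p\<close> by simp
        show False
        proof (cases "Suc j < p")
          case True
          then show False using \<open>Suc j mod p = j'\<close> jj by simp
        next
          case False
          then have "Suc j = p" using j by simp
          then have "j' = 0" using \<open>Suc j mod p = j'\<close> by simp
          then show False using jj \<open>Suc j = p\<close> assms(3) by simp
        qed
      next
        case False
        then have "Suc j' = p" using j by simp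
        then have "j = 0" using \<open>j = Suc j' mod p\<close> by simp
        then have "j' = Suc 0 mod p" using \<open>Suc j mod p = j'\<close> by simp
        then have "j' = 1" using assms(3) by simp
        then show False using \<open>Suc j' = p\<close> assms(3) by simp
      qed
    qed
  qed
  then have "is_circuit F p c" unfolding is_circuit_def using edge by blast
  then show ?thesis unfolding has_circuit_of_length_def by blast
qed


lemma greedy_path:
  assumes "finite W" "\<forall>x\<in>W. D \<le> card (nbr F W x)" "y \<in> W" "y \<notin> Z" "finite Z"
    "\<forall>x. {x,x} \<notin> F"
  shows "n + card Z \<le> D \<Longrightarrow> \<exists>f. f 0 = y \<and> inj_on f {..n} \<and> (\<forall>j\<le>n. f j \<in> W - Z) \<and> (\<forall>j<n. {f j, f (Suc j)} \<in> F)"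
proof (induction n)
  case 0 then show ?case using assms(3,4) by (intro exI[of _ "\<lambda>_. y"]) auto
next
  case (Suc n)
  then obtain f where f: "f 0 = y" "inj_on f {..n}" "\<forall>j\<le>n. f j \<in> W - Z" "\<forall>j<n. {f j, f (Suc j)} \<in> F"
    by fastforce
  define N where "N = nbr F W (f n)"
  have fn: "f n \<in> W" using f(3) by auto
  have cN: "D \<le> card N" using assms(2) fn unfolding N_def by auto
  have finN: "finite N" unfolding N_def nbr_def using assms(1) by auto
  have cS: "card (f ` {..<n} \<union> Z) \<le> n + card Z"
  proof -
    have "card (f ` {..<n} \<union> Z) \<le> card (f ` {..<n}) + card Z" by (rule card_Un_le)
    moreover have "card (f ` {..<n}) \<le> n" using card_image_le[of "{..<n}" f] by simp
    ultimately show ?thesis by linarith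
  qed
  have "\<not> N \<subseteq> f ` {..<n} \<union> Z"
  proof
    assume "N \<subseteq> f ` {..<n} \<union> Z"
    then have "card N \<le> card (f ` {..<n} \<union> Z)" using assms(5) by (intro card_mono) auto
    then show False using cS cN Suc.prems by linarith
  qed
  then obtain w where w: "w \<in> N" "w \<notin> f ` {..<n}" "w \<notin> Z" by blast
  have wF: "{f n, w} \<in> F" "w \<in> W" using w(1) unfolding N_def nbr_def by auto
  have "w \<noteq> f n" using wF(1) assms(6) by auto
  then have wn: "w \<notin> f ` {..n}" using w(2) by (auto simp: less_Suc_eq_le[symmetric] lessThan_Suc_atMost[symmetric] lessThan_Suc)
  define g where "g = f(Suc n := w)"
  have geq: "\<forall>j\<le>n. g j = f j" unfolding g_def by auto
  have "inj_on g {..n}" using f(2) geq by (metis atMost_iff inj_on_cong)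
  moreover have "g (Suc n) \<notin> g ` {..n}" using wn geq by (auto simp: g_def)
  ultimately have "inj_on g {..Suc n}" by (simp add: atMost_Suc)
  moreover have "g 0 = y" using f(1) by (simp add: g_def)
  moreover have "\<forall>j\<le>Suc n. g j \<in> W - Z" using f(3) w wF by (auto simp: g_def le_Suc_eq)
  moreover have "\<forall>j<Suc n. {g j, g (Suc j)} \<in> F" using f(4) wF by (auto simp: g_def less_Suc_eq)
  ultimately show ?case by blast
qed

lemma sigma_le_edges:
  assumes "finite (A \<union> B)" "A \<inter> B = {}"
  shows "card (Sigma A (nbr F B)) \<le> card (edges_in F (A \<union> B))"
proof -
  have "inj_on (\<lambda>(x,w). {x,w}) (Sigma A (nbr F B))"
  proof (rule inj_onI, clarify)
    fix x w x' w' assume h: "x \<in> A" "w \<in> nbr F B x" "x' \<in> A" "w' \<in> nbr F B x'" "{x,w} = {x',w'}"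
    then have "w \<in> B" "w' \<in> B" unfolding nbr_def by auto
    then have "x \<noteq> w'" using h(1) assms(2) by auto
    then show "x = x' \<and> w = w'" using h(5) by (auto simp: doubleton_eq_iff)
  qed
  moreover have "(\<lambda>(x,w). {x,w}) ` Sigma A (nbr F B) \<subseteq> edges_in F (A \<union> B)"
    by (auto simp: nbr_def edges_in_def)
  ultimately show ?thesis by (rule card_inj_on_le[OF _ _ edges_in_finite[OF assms(1)]])
qed

definition cross :: "'a set set \<Rightarrow> 'a set \<Rightarrow> 'a set set" where
  "cross E A = {e\<in>E. card (e \<inter> A) = 1}"

lemma maxcut:
  assumes "finite V" "\<forall>e\<in>E. e \<subseteq> V \<and> card e = 2"
  shows "\<exists>A\<subseteq>V. card E \<le> 2 * card (cross E A)"
  using assms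
proof (induction V arbitrary: E rule: finite_induct)
  case empty
  have "False" if "e \<in> E" for e
  proof -
    have "e \<subseteq> {}" "card e = 2" using empty.prems that by auto
    then show False by simp
  qed
  then have "E = {}" by blast
  then show ?case by auto
next
  case (insert v V)
  define E1 where "E1 = {e\<in>E. v \<notin> e}"
  define E2 where "E2 = {e\<in>E. v \<in> e}"
  have e1: "\<forall>e\<in>E1. e \<subseteq> V \<and> card e = 2" using insert.prems unfolding E1_def by auto
  have "\<exists>A\<subseteq>V. card E1 \<le> 2 * card (cross E1 A)" by (rule insert.IH[OF e1])
  then obtain A where A: "A \<subseteq> V" "card E1 \<le> 2 * card (cross E1 A)" by blast
  have vA: "v \<notin> A" using A(1) insert.hyps(2) by auto
  have finE: "finite E"
    by (rule finite_subset[of _ "Pow (insert v V)"]) (use insert.prems insert.hyps(1) in auto)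
  have finE1: "finite E1" and finE2: "finite E2" using finE unfolding E1_def E2_def by auto
  have E12: "E = E1 \<union> E2" "E1 \<inter> E2 = {}" unfolding E1_def E2_def by auto
  have cE: "card E = card E1 + card E2" using card_Un_disjoint[OF finE1 finE2 E12(2)] E12(1) by simp
  have cr: "card (cross E B) = card (cross E1 B) + card (cross E2 B)" for B
  proof -
    have "cross E B = cross E1 B \<union> cross E2 B" "cross E1 B \<inter> cross E2 B = {}"
      unfolding cross_def E1_def E2_def by auto
    moreover have "finite (cross E1 B)" "finite (cross E2 B)"
      using finE1 finE2 unfolding cross_def by auto
    ultimately show ?thesis by (simp add: card_Un_disjoint)
  qed
  have c1: "cross E1 (insert v A) = cross E1 A"
  proof -
    have "e \<inter> insert v A = e \<inter> A" if "e \<in> E1" for e using that unfolding E1_def by auto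
    then show ?thesis unfolding cross_def by auto
  qed
  have cov: "E2 \<subseteq> cross E2 A \<union> cross E2 (insert v A)"
  proof
    fix e assume e: "e \<in> E2"
    then have "card e = 2" "v \<in> e" "e \<subseteq> insert v V" using insert.prems unfolding E2_def by auto
    from \<open>card e = 2\<close> obtain a b where ab: "e = {a,b}" "a \<noteq> b" unfolding card_2_iff by blast
    then have "\<exists>w. e = {v,w} \<and> w \<noteq> v" using \<open>v \<in> e\<close> by auto
    then obtain w where w: "e = {v,w}" "w \<noteq> v" by blast
    show "e \<in> cross E2 A \<union> cross E2 (insert v A)"
    proof (cases "w \<in> A")
      case True
      then have "e \<inter> A = {w}" using w vA by auto
      then show ?thesis using e unfolding cross_def by auto
    next
      case False
      then have "e \<inter> insert v A = {v}" using w vA by auto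
      then show ?thesis using e unfolding cross_def by auto
    qed
  qed
  have "card E2 \<le> card (cross E2 A) + card (cross E2 (insert v A))"
  proof -
    have "finite (cross E2 A)" "finite (cross E2 (insert v A))" using finE2 unfolding cross_def by auto
    then have "card (cross E2 A \<union> cross E2 (insert v A)) \<le> card (cross E2 A) + card (cross E2 (insert v A))"
      by (simp add: card_Un_le)
    moreover have "card E2 \<le> card (cross E2 A \<union> cross E2 (insert v A))"
      using cov finE2 by (intro card_mono) (auto simp: cross_def)
    ultimately show ?thesis by linarith
  qed
  show ?case
  proof (cases "card (cross E2 (insert v A)) \<le> card (cross E2 A)")
    case True
    then have "card E \<le> 2 * card (cross E A)" using cE cr[of A] A(2) \<open>card E2 \<le> _\<close> by linarith
    then show ?thesis using A(1) by auto
  next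
    case False
    then have "card E \<le> 2 * card (cross E (insert v A))"
      using cE cr[of "insert v A"] A(2) \<open>card E2 \<le> _\<close> unfolding c1 by linarith
    moreover have "insert v A \<subseteq> insert v V" using A(1) by auto
    ultimately show ?thesis by blast
  qed
qed


lemma two_elems: "2 \<le> card S \<Longrightarrow> \<exists>a\<in>S. \<exists>b\<in>S. a \<noteq> b"
proof -
  assume h: "2 \<le> card S"
  then have "S \<noteq> {}" by auto
  then obtain a where a: "a \<in> S" by blast
  have "finite S"
  proof (rule ccontr)
    assume "infinite S" then have "card S = 0" by simp
    then show False using h by simp
  qed
  then have "card (S - {a}) \<ge> 1" using h a by (simp add: card_Diff_singleton)
  then have "S - {a} \<noteq> {}" by (intro notI) simp
  then obtain b where "b \<in> S - {a}" by blast
  then show ?thesis using a by blast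
qed

locale bfs =
  fixes F :: "'a set set" and X Y W :: "'a set" and r :: 'a and k :: nat
  assumes finW: "finite W"
    and bip: "\<forall>e\<in>F. \<exists>x\<in>X. \<exists>y\<in>Y. e = {x,y}"
    and disj: "X \<inter> Y = {}"
    and WXY: "W \<subseteq> X \<union> Y"
    and rW: "r \<in> W"
    and noc: "\<not> has_circuit_of_length F (2*k)"
    and k2: "2 \<le> k"
begin

lemma edge_sides: "{u,w} \<in> F \<Longrightarrow> (u \<in> X \<and> w \<in> Y) \<or> (u \<in> Y \<and> w \<in> X)"
proof -
  assume "{u,w} \<in> F"
  then obtain x y where "x \<in> X" "y \<in> Y" "{u,w} = {x,y}" using bip by blast
  then show ?thesis by (auto simp: doubleton_eq_iff)
qed

lemma irr: "{u,u} \<notin> F"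
proof
  assume "{u,u} \<in> F"
  then have "u \<in> X" "u \<in> Y" using edge_sides by blast+
  then show False using disj by blast
qed

lemma edge_sym: "{u,w} \<in> F \<Longrightarrow> {w,u} \<in> F" by (simp add: insert_commute)

lemma card_edges: "\<forall>e\<in>F. card e = 2"
proof
  fix e assume "e \<in> F"
  then obtain x y where "x \<in> X" "y \<in> Y" "e = {x,y}" using bip by blast
  moreover have "x \<noteq> y" using calculation disj by blast
  ultimately show "card e = 2" by simp
qed

primrec R :: "nat \<Rightarrow> 'a set" where
  "R 0 = {r}"
| "R (Suc i) = R i \<union> {w\<in>W. \<exists>x\<in>R i. {x,w} \<in> F}"

definition L :: "nat \<Rightarrow> 'a set" where
  "L i = {x\<in>R i. \<forall>j<i. x \<notin> R j}"

lemma R_W: "R i \<subseteq> W"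
  by (induction i) (auto simp: rW)

lemma R_mono: "i \<le> j \<Longrightarrow> R i \<subseteq> R j"
  by (rule lift_Suc_mono_le[of R]) auto

lemma L_R: "L i \<subseteq> R i" unfolding L_def by auto

lemma L_W: "L i \<subseteq> W" using L_R R_W by blast

lemma finL: "finite (L i)" using L_W finW finite_subset by blast

lemma R_L: "x \<in> R i \<Longrightarrow> \<exists>j\<le>i. x \<in> L j"
proof -
  assume h: "x \<in> R i"
  define j where "j = (LEAST j. x \<in> R j)"
  have "x \<in> R j" unfolding j_def by (rule LeastI[of _ i]) (rule h)
  moreover have "\<forall>j'<j. x \<notin> R j'" unfolding j_def using not_less_Least by blast
  moreover have "j \<le> i" unfolding j_def by (rule Least_le) (rule h)
  ultimately show ?thesis unfolding L_def by blast
qed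

lemma L_unique: "x \<in> L i \<Longrightarrow> x \<in> L j \<Longrightarrow> i = j"
proof (rule ccontr)
  assume h: "x \<in> L i" "x \<in> L j" "i \<noteq> j"
  then have "i < j \<or> j < i" by auto
  then show False using h(1,2) unfolding L_def by auto
qed

lemma L0: "L 0 = {r}" unfolding L_def by auto

lemma L_parent: "x \<in> L (Suc i) \<Longrightarrow> \<exists>w\<in>L i. {w,x} \<in> F"
proof -
  assume h: "x \<in> L (Suc i)"
  then have "x \<in> R (Suc i)" "x \<notin> R i" unfolding L_def by auto
  then obtain w where w: "w \<in> R i" "{w,x} \<in> F" by auto
  then obtain j where j: "j \<le> i" "w \<in> L j" using R_L by blast
  have "j = i"
  proof (rule ccontr)
    assume "j \<noteq> i"
    then have "Suc j \<le> i" using j by auto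
    moreover have "x \<in> R (Suc j)" using j(2) w(2) L_R \<open>x \<in> R (Suc i)\<close> R_W by auto
    ultimately show False using R_mono \<open>x \<notin> R i\<close> by blast
  qed
  then show ?thesis using j w by blast
qed

lemma side: "x \<in> L i \<Longrightarrow> (x \<in> X \<longleftrightarrow> (r \<in> X \<longleftrightarrow> even i))"
proof (induction i arbitrary: x)
  case 0 then show ?case using L0 by auto
next
  case (Suc i)
  then obtain w where w: "w \<in> L i" "{w,x} \<in> F" using L_parent by blast
  have "(w \<in> X \<and> x \<in> Y) \<or> (w \<in> Y \<and> x \<in> X)" using edge_sides[OF w(2)] .
  then have "x \<in> X \<longleftrightarrow> w \<notin> X" using disj by blast
  then show ?case using Suc.IH[OF w(1)] by auto
qed

lemma no_same: "x \<in> L i \<Longrightarrow> w \<in> L i \<Longrightarrow> {x,w} \<notin> F"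
proof
  assume h: "x \<in> L i" "w \<in> L i" "{x,w} \<in> F"
  then have "x \<in> X \<longleftrightarrow> w \<in> X" using side by blast
  moreover have "(x \<in> X \<and> w \<in> Y) \<or> (x \<in> Y \<and> w \<in> X)" using edge_sides[OF h(3)] .
  ultimately show False using disj by blast
qed

lemma L_nbr: "x \<in> L i \<Longrightarrow> w \<in> W \<Longrightarrow> {x,w} \<in> F \<Longrightarrow> w \<in> L (Suc i) \<or> (0 < i \<and> w \<in> L (i - 1))"
proof -
  assume h: "x \<in> L i" "w \<in> W" "{x,w} \<in> F"
  have "x \<in> R i" using h(1) L_R by auto
  then have "w \<in> R (Suc i)" using h by auto
  then obtain j where j: "j \<le> Suc i" "w \<in> L j" using R_L by blast
  have "\<not> Suc j < i"
  proof
    assume "Suc j < i"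
    have "w \<in> R j" using j(2) L_R by auto
    moreover have "x \<in> W" using h(1) L_W by auto
    moreover have "{w,x} \<in> F" using h(3) edge_sym by auto
    ultimately have "x \<in> R (Suc j)" by auto
    then have "x \<in> R (i - 1)" 
    proof -
      have "Suc j \<le> i - 1" using \<open>Suc j < i\<close> by auto
      then have "R (Suc j) \<subseteq> R (i - 1)" by (rule R_mono)
      then show ?thesis using \<open>x \<in> R (Suc j)\<close> by blast
    qed
    moreover have "i - 1 < i" using \<open>Suc j < i\<close> by auto
    ultimately show False using h(1) unfolding L_def by blast
  qed
  moreover have "j \<noteq> i" using no_same h j by blast
  ultimately have "j = Suc i \<or> (0 < i \<and> j = i - 1)" using j(1) by auto
  then show ?thesis using j by auto
qed

definition par :: "'a \<Rightarrow> 'a" where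
  "par x = (SOME w. \<exists>i. x \<in> L (Suc i) \<and> w \<in> L i \<and> {w,x} \<in> F)"

lemma par: "x \<in> L (Suc i) \<Longrightarrow> par x \<in> L i \<and> {par x, x} \<in> F"
proof -
  assume h: "x \<in> L (Suc i)"
  then have "\<exists>w. \<exists>i. x \<in> L (Suc i) \<and> w \<in> L i \<and> {w,x} \<in> F" using L_parent by blast
  then have "\<exists>i'. x \<in> L (Suc i') \<and> par x \<in> L i' \<and> {par x,x} \<in> F"
    unfolding par_def by (rule someI_ex)
  then obtain i' where "x \<in> L (Suc i')" "par x \<in> L i'" "{par x,x} \<in> F" by blast
  moreover have "i' = i" using L_unique[OF h calculation(1)] by simp
  ultimately show ?thesis by simp
qed

lemma parn: "x \<in> L i \<Longrightarrow> j \<le> i \<Longrightarrow> (par ^^ j) x \<in> L (i - j)"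
proof (induction j)
  case 0 then show ?case by simp
next
  case (Suc j)
  then have "(par ^^ j) x \<in> L (Suc (i - Suc j))" by (simp add: Suc_diff_Suc)
  then show ?case using par by simp
qed

lemma parn_edge: "x \<in> L i \<Longrightarrow> Suc j \<le> i \<Longrightarrow> {(par ^^ j) x, (par ^^ Suc j) x} \<in> F"
proof -
  assume h: "x \<in> L i" "Suc j \<le> i"
  then have "(par ^^ j) x \<in> L (Suc (i - Suc j))" using parn[OF h(1), of j] by (simp add: Suc_diff_Suc)
  then have "{par ((par ^^ j) x), (par ^^ j) x} \<in> F" using par by blast
  then show ?thesis by (simp add: insert_commute)
qed

lemma parn_root: "x \<in> L i \<Longrightarrow> (par ^^ i) x = r"
  using parn[of x i i] L0 by simp

lemma parn_add: "(par ^^ (a + b)) x = (par ^^ a) ((par ^^ b) x)"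
  by (simp add: funpow_add)

end


lemma succ_upt:
  assumes "\<forall>j. a \<le> j \<longrightarrow> Suc j < b \<longrightarrow> P (g j) (g (Suc j))"
  shows "successively P (map g [a..<b])"
proof -
  have "\<forall>i. Suc i < length [a..<b] \<longrightarrow> P (g ([a..<b] ! i)) (g ([a..<b] ! Suc i))"
  proof (intro allI impI)
    fix i assume h: "Suc i < length [a..<b]"
    then have "a \<le> a + i" "Suc (a + i) < b" by auto
    then have "P (g (a + i)) (g (Suc (a + i)))" using assms by blast
    then show "P (g ([a..<b] ! i)) (g ([a..<b] ! Suc i))" using h by simp
  qed
  then have "successively (\<lambda>x y. P (g x) (g y)) [a..<b]" unfolding successively_conv_nth by simp
  then show ?thesis unfolding successively_map by simp
qed

context bfs
begin

lemma core:
  assumes i: "i < k" and Wsub: "W' \<subseteq> L i \<union> L (Suc i)" and ne: "W' \<noteq> {}"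
    and deg: "\<forall>x\<in>W'. 2*k \<le> card (nbr F W' x)"
  shows False
proof -
  have W'W: "W' \<subseteq> W" using Wsub L_W by blast
  have finW': "finite W'" using W'W finW finite_subset by blast
  have nbrY: "nbr F W' y \<subseteq> L i" if "y \<in> W'" "y \<in> L (Suc i)" for y
  proof
    fix w assume "w \<in> nbr F W' y"
    then have w: "w \<in> W'" "{y,w} \<in> F" unfolding nbr_def by auto
    then have "w \<notin> L (Suc i)" using no_same that(2) by blast
    then show "w \<in> L i" using w Wsub by blast
  qed
  have nbrX: "nbr F W' x \<subseteq> L (Suc i)" if "x \<in> W'" "x \<in> L i" for x
  proof
    fix w assume "w \<in> nbr F W' x"
    then have w: "w \<in> W'" "{x,w} \<in> F" unfolding nbr_def by auto
    then have "w \<notin> L i" using no_same that(2) by blast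
    then show "w \<in> L (Suc i)" using w Wsub by blast
  qed
  have k1: "2 \<le> 2 * k" using k2 by simp
  obtain y0 where y0: "y0 \<in> W'" "y0 \<in> L (Suc i)"
  proof -
    obtain w where w: "w \<in> W'" using ne by blast
    show ?thesis
    proof (cases "w \<in> L (Suc i)")
      case True then show ?thesis using that w by blast
    next
      case False
      then have wL: "w \<in> L i" using w Wsub by blast
      have "2 \<le> card (nbr F W' w)" using deg w k1 by fastforce
      then have "nbr F W' w \<noteq> {}" by (intro notI) simp
      then obtain y where y: "y \<in> nbr F W' w" by blast
      then have "y \<in> W'" unfolding nbr_def by auto
      moreover have "y \<in> L (Suc i)" using nbrX[OF w wL] y by blast
      ultimately show ?thesis using that by blast
    qed
  qed
  define T where "T = {(y,a,b). y \<in> W' \<and> y \<in> L (Suc i) \<and> a \<in> nbr F W' y \<and> b \<in> nbr F W' y \<and> a \<noteq> b}"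
  have finT: "finite T"
  proof (rule finite_subset[of _ "W' \<times> W' \<times> W'"])
    show "T \<subseteq> W' \<times> W' \<times> W'" unfolding T_def nbr_def by auto
    show "finite (W' \<times> W' \<times> W')" using finW' by simp
  qed
  have "2 \<le> card (nbr F W' y0)" using deg y0 k1 by fastforce
  then obtain a0 b0 where "a0 \<in> nbr F W' y0" "b0 \<in> nbr F W' y0" "a0 \<noteq> b0" using two_elems by blast
  then have T0: "(y0, a0, b0) \<in> T" unfolding T_def using y0 by blast
  define mu where "mu = (\<lambda>a b. LEAST s. (par ^^ s) a = (par ^^ s) b)"
  have mu: "mu a b \<le> i \<and> (par ^^ mu a b) a = (par ^^ mu a b) b" if "a \<in> L i" "b \<in> L i" for a b
  proof -
    have wit: "(par ^^ i) a = (par ^^ i) b" using parn_root that by simp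
    have "(LEAST s. (par ^^ s) a = (par ^^ s) b) \<le> i" by (rule Least_le) (rule wit)
    moreover have "(par ^^ (LEAST s. (par ^^ s) a = (par ^^ s) b)) a = (par ^^ (LEAST s. (par ^^ s) a = (par ^^ s) b)) b"
      by (rule LeastI[of _ i]) (rule wit)
    ultimately show ?thesis unfolding mu_def by simp
  qed
  define s where "s = Max ((\<lambda>(y,a,b). mu a b) ` T)"
  have "s \<in> (\<lambda>(y,a,b). mu a b) ` T" unfolding s_def using finT T0 by (intro Max_in) auto
  then obtain y1 a1 b1 where T1: "(y1,a1,b1) \<in> T" and s1: "s = mu a1 b1" by auto
  have y1: "y1 \<in> W'" "y1 \<in> L (Suc i)" and a1: "a1 \<in> nbr F W' y1" and b1: "b1 \<in> nbr F W' y1"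
    and ab1: "a1 \<noteq> b1" using T1 unfolding T_def by auto
  have a1L: "a1 \<in> L i" and b1L: "b1 \<in> L i" using nbrY[OF y1] a1 b1 by auto
  have smax: "mu a b \<le> s" if "(y,a,b) \<in> T" for y a b
  proof -
    have "mu a b \<in> (\<lambda>(y,a,b). mu a b) ` T" using that by force
    then show ?thesis unfolding s_def using finT by (intro Max_ge) auto
  qed
  have P: "(par ^^ s) q1 = (par ^^ s) q2"
    if "y \<in> W'" "y \<in> L (Suc i)" "q1 \<in> nbr F W' y" "q2 \<in> nbr F W' y" for y q1 q2
  proof (cases "q1 = q2")
    case True then show ?thesis by simp
  next
    case False
    then have "(y,q1,q2) \<in> T" unfolding T_def using that by blast
    then have le: "mu q1 q2 \<le> s" using smax by blast
    have "q1 \<in> L i" "q2 \<in> L i" using nbrY[OF that(1,2)] that(3,4) by auto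
    then have eq: "(par ^^ mu q1 q2) q1 = (par ^^ mu q1 q2) q2" using mu by blast
    have "s = (s - mu q1 q2) + mu q1 q2" using le by simp
    then show ?thesis using eq parn_add by metis
  qed
  have smu: "s \<le> i" "(par ^^ s) a1 = (par ^^ s) b1" using mu[OF a1L b1L] s1 by auto
  have s_pos: "1 \<le> s"
  proof (rule ccontr)
    assume "\<not> 1 \<le> s"
    then have "s = 0" by simp
    then show False using smu(2) ab1 by simp
  qed
  have ne1: "(par ^^ (s - 1)) a1 \<noteq> (par ^^ (s - 1)) b1"
  proof -
    have "s - 1 < mu a1 b1" using s1 s_pos by simp
    then show ?thesis unfolding mu_def by (rule not_less_Least)
  qed
  define t where "t = k - s"
  have t1: "1 \<le> t" unfolding t_def using smu(1) i by simp
  define n where "n = 2 * t - 1"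
  define Z where "Z = {a1, b1}"
  have cZ: "card Z = 2" unfolding Z_def using ab1 by simp
  have y1Z: "y1 \<notin> Z"
  proof
    assume "y1 \<in> Z"
    then have "y1 \<in> L i" using a1L b1L Z_def by auto
    then show False using L_unique[OF y1(2), of i] by simp
  qed
  have nle: "n + card Z \<le> 2 * k" unfolding n_def cZ t_def using s_pos smu(1) i by simp
  have "\<forall>x. {x,x} \<notin> F" using irr by blast
  then obtain f where f0: "f 0 = y1" and finj: "inj_on f {..n}" and fW: "\<forall>j\<le>n. f j \<in> W' - Z"
    and fE: "\<forall>j<n. {f j, f (Suc j)} \<in> F"
    using greedy_path[OF finW' deg y1(1) y1Z _ _ nle] unfolding Z_def by auto
  have flev: "(even j \<longrightarrow> f j \<in> L (Suc i)) \<and> (odd j \<longrightarrow> f j \<in> L i)" if "j \<le> n" for j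
    using that
  proof (induction j)
    case 0 then show ?case using f0 y1 by simp
  next
    case (Suc j)
    then have IH: "(even j \<longrightarrow> f j \<in> L (Suc i)) \<and> (odd j \<longrightarrow> f j \<in> L i)" by simp
    have e: "{f j, f (Suc j)} \<in> F" using fE Suc.prems by simp
    have m: "f (Suc j) \<in> L i \<union> L (Suc i)" using fW Suc.prems Wsub by blast
    show ?case
    proof (cases "even j")
      case True
      then have "f j \<in> L (Suc i)" using IH by simp
      then have "f (Suc j) \<notin> L (Suc i)" using no_same e by blast
      then show ?thesis using m True by simp
    next
      case False
      then have "f j \<in> L i" using IH by simp
      then have "f (Suc j) \<notin> L i" using no_same e by blast
      then show ?thesis using m False by simp
    qed
  qed
  define z where "z = (par ^^ s) a1"
  have fnbr: "f (Suc j) \<in> nbr F W' (f j)" if "j < n" for j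
    using fE fW that unfolding nbr_def by auto
  have fnbr': "f j \<in> nbr F W' (f (Suc j))" if "j < n" for j
    using fE fW that unfolding nbr_def by (auto simp: insert_commute)
  have zeq: "2 * m + 1 \<le> n \<longrightarrow> (par ^^ s) (f (2 * m + 1)) = z" for m
  proof (induction m)
    case 0
    show ?case
    proof
      assume "2 * 0 + 1 \<le> n"
      then have "f 1 \<in> nbr F W' y1" using fnbr[of 0] f0 by simp
      then show "(par ^^ s) (f (2 * 0 + 1)) = z" unfolding z_def using P[OF y1 _ a1] by simp
    qed
  next
    case (Suc m)
    show ?case
    proof
      assume h: "2 * Suc m + 1 \<le> n"
      have ev: "f (2*m+2) \<in> L (Suc i)" using flev[of "2*m+2"] h by simp
      have ew: "f (2*m+2) \<in> W'" using fW h by simp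
      have n1: "f (2*m+3) \<in> nbr F W' (f (2*m+2))" using fnbr[of "2*m+2"] h by (simp add: numeral_3_eq_3)
      have n2: "f (2*m+1) \<in> nbr F W' (f (2*m+2))" using fnbr'[of "2*m+1"] h by (simp add: numeral_2_eq_2)
      have "(par ^^ s) (f (2*m+3)) = (par ^^ s) (f (2*m+1))" using P[OF ew ev n1 n2] .
      moreover have "(par ^^ s) (f (2*m+1)) = z" using Suc.IH h by simp
      ultimately show "(par ^^ s) (f (2 * Suc m + 1)) = z" by (simp add: numeral_3_eq_3)
    qed
  qed
  define q where "q = f n"
  have n_odd: "n = 2 * (t - 1) + 1" unfolding n_def using t1 by simp
  have qz: "(par ^^ s) q = z" unfolding q_def using zeq[of "t - 1"] n_odd by simp
  have qL: "q \<in> L i" unfolding q_def using flev[of n] n_odd by simp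
  have qW: "q \<in> W'" unfolding q_def using fW by simp
  obtain b' where b'Z: "b' \<in> Z" and b'ne: "(par ^^ (s - 1)) b' \<noteq> (par ^^ (s - 1)) q"
  proof (cases "(par ^^ (s - 1)) q = (par ^^ (s - 1)) a1")
    case True then show ?thesis using that[of b1] ne1 Z_def by auto
  next
    case False then show ?thesis using that[of a1] Z_def by auto
  qed
  have b'L: "b' \<in> L i" using b'Z a1L b1L Z_def by auto
  have b'e: "{y1, b'} \<in> F" using b'Z a1 b1 Z_def unfolding nbr_def by auto
  have b'z: "(par ^^ s) b' = z" using b'Z smu(2) z_def Z_def by auto
  have b'f: "b' \<notin> f ` {..n}" using fW b'Z by auto
  have fL: "f j \<in> L i \<union> L (Suc i)" if "j \<le> n" for j using fW Wsub that by blast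
  define Q3 where "Q3 = map (\<lambda>l. (par ^^ (s - l)) q) [0..<s]"
  define P1 where "P1 = map (\<lambda>j. f (n - j)) [0..<Suc n]"
  define P2 where "P2 = map (\<lambda>l. (par ^^ l) b') [1..<Suc s]"
  define P2m where "P2m = map (\<lambda>l. (par ^^ l) b') [1..<s]"
  define cs where "cs = Q3 @ P1 @ [b'] @ P2m"
  have len: "length cs = 2 * k" unfolding cs_def Q3_def P1_def P2m_def
    using n_odd s_pos t1 t_def smu(1) i by simp
  have Q3ne: "Q3 \<noteq> []" unfolding Q3_def using s_pos by simp
  have hdcs: "hd cs = z" unfolding cs_def Q3_def using s_pos qz by (simp add: hd_map)
  have P2eq: "P2m @ [z] = P2" unfolding P2m_def P2_def using s_pos b'z
    by (simp add: upt_Suc_append)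
  have csz: "cs @ [hd cs] = Q3 @ P1 @ [b'] @ P2"
  proof -
    have "cs @ [hd cs] = cs @ [z]" using hdcs by simp
    also have "\<dots> = Q3 @ P1 @ [b'] @ P2" using P2eq by (simp add: cs_def)
    finally show ?thesis .
  qed
  have setQ3: "set Q3 = (\<lambda>m. (par ^^ m) q) ` {1..s}"
  proof -
    have "(\<lambda>l. s - l) ` {0..<s} = {1..s}"
    proof
      show "(\<lambda>l. s - l) ` {0..<s} \<subseteq> {1..s}" by auto
      show "{1..s} \<subseteq> (\<lambda>l. s - l) ` {0..<s}"
      proof
        fix m assume "m \<in> {1..s}"
        then have "m = s - (s - m)" "s - m \<in> {0..<s}" by auto
        then show "m \<in> (\<lambda>l. s - l) ` {0..<s}" by blast
      qed
    qed
    then have "(\<lambda>m. (par ^^ m) q) ` {1..s} = (\<lambda>m. (par ^^ m) q) ` (\<lambda>l. s - l) ` {0..<s}" by simp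
    also have "\<dots> = (\<lambda>l. (par ^^ (s - l)) q) ` {0..<s}" by (simp add: image_image)
    moreover have "set Q3 = (\<lambda>l. (par ^^ (s - l)) q) ` {0..<s}" unfolding Q3_def by (simp only: set_map set_upt)
    ultimately show ?thesis by simp
  qed
  have setP2m: "set P2m = (\<lambda>l. (par ^^ l) b') ` {1..<s}" unfolding P2m_def by simp
  have setP1: "set P1 = f ` {..n}"
  proof -
    have "(\<lambda>j. n - j) ` {0..<Suc n} = {..n}"
    proof
      show "(\<lambda>j. n - j) ` {0..<Suc n} \<subseteq> {..n}" by auto
      show "{..n} \<subseteq> (\<lambda>j. n - j) ` {0..<Suc n}"
      proof
        fix m assume "m \<in> {..n}"
        then have "m = n - (n - m)" "n - m \<in> {0..<Suc n}" by auto
        then show "m \<in> (\<lambda>j. n - j) ` {0..<Suc n}" by blast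
      qed
    qed
    then have "f ` {..n} = f ` (\<lambda>j. n - j) ` {0..<Suc n}" by simp
    also have "\<dots> = (\<lambda>j. f (n - j)) ` {0..<Suc n}" by (simp add: image_image)
    moreover have "set P1 = (\<lambda>j. f (n - j)) ` {0..<Suc n}" unfolding P1_def by (simp only: set_map set_upt)
    ultimately show ?thesis by simp
  qed
  have lvq: "(par ^^ m) q \<in> L (i - m)" if "m \<le> s" for m using parn[OF qL] that smu(1) by simp
  have lvb: "(par ^^ m) b' \<in> L (i - m)" if "m \<le> s" for m using parn[OF b'L] that smu(1) by simp
  have notlow: "x \<notin> L (i - m)" if "x \<in> L i \<union> L (Suc i)" "1 \<le> m" "m \<le> s" for x m
  proof
    assume "x \<in> L (i - m)"
    moreover have "i - m \<noteq> i" "i - m \<noteq> Suc i" using that(2,3) smu(1) by auto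
    ultimately show False using that(1) L_unique by blast
  qed
  have D1: "distinct Q3" unfolding Q3_def distinct_map
  proof
    show "inj_on (\<lambda>l. (par ^^ (s - l)) q) (set [0..<s])"
    proof (rule inj_onI)
      fix l l' assume h: "l \<in> set [0..<s]" "l' \<in> set [0..<s]" "(par ^^ (s - l)) q = (par ^^ (s - l')) q"
      have "(par ^^ (s - l)) q \<in> L (i - (s - l))" using lvq[of "s - l"] by simp
      moreover have "(par ^^ (s - l)) q \<in> L (i - (s - l'))" using lvq[of "s - l'"] h(3) by simp
      ultimately have "i - (s - l) = i - (s - l')" using L_unique by blast
      then show "l = l'" using h(1,2) smu(1) by auto
    qed
  qed simp
  have D2: "distinct P1" unfolding P1_def distinct_map
  proof
    show "inj_on (\<lambda>j. f (n - j)) (set [0..<Suc n])"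
    proof (rule inj_onI)
      fix j j' assume h: "j \<in> set [0..<Suc n]" "j' \<in> set [0..<Suc n]" "f (n - j) = f (n - j')"
      then have "n - j = n - j'" using finj unfolding inj_on_def by auto
      then show "j = j'" using h(1,2) by auto
    qed
  qed simp
  have D3: "distinct P2m" unfolding P2m_def distinct_map
  proof
    show "inj_on (\<lambda>l. (par ^^ l) b') (set [1..<s])"
    proof (rule inj_onI)
      fix l l' assume h: "l \<in> set [1..<s]" "l' \<in> set [1..<s]" "(par ^^ l) b' = (par ^^ l') b'"
      have "(par ^^ l) b' \<in> L (i - l)" using lvb[of l] h(1) by simp
      moreover have "(par ^^ l) b' \<in> L (i - l')" using lvb[of l'] h(2,3) by simp
      ultimately have "i - l = i - l'" using L_unique by blast
      then show "l = l'" using h(1,2) smu(1) by auto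
    qed
  qed simp
  have D4: "b' \<notin> set P2m"
  proof
    assume "b' \<in> set P2m"
    then obtain l where "l \<in> {1..<s}" "b' = (par ^^ l) b'" using setP2m by auto
    then have "b' \<in> L (i - l)" using lvb[of l] by simp
    then show False using notlow[of b' l] b'L \<open>l \<in> {1..<s}\<close> by auto
  qed
  have D5: "set P1 \<inter> set ([b'] @ P2m) = {}"
  proof -
    have "b' \<notin> set P1" using setP1 b'f by simp
    moreover have "x \<notin> set P2m" if xP1: "x \<in> set P1" for x
    proof
      assume "x \<in> set P2m"
      then obtain l where l: "l \<in> {1..<s}" "x = (par ^^ l) b'" using setP2m by auto
      then have "x \<in> L (i - l)" using lvb[of l] by simp
      moreover obtain j where "j \<le> n" "x = f j" using xP1 setP1 by auto
      then have "x \<in> L i \<union> L (Suc i)" using fL by simp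
      ultimately show False using notlow[of x l] l(1) by auto
    qed
    ultimately show ?thesis by auto
  qed
  have D6: "set Q3 \<inter> set (P1 @ [b'] @ P2m) = {}"
  proof -
    have "False" if xQ: "x \<in> set Q3" and xR: "x \<in> set (P1 @ [b'] @ P2m)" for x
    proof -
      obtain m where m: "m \<in> {1..s}" "x = (par ^^ m) q" using xQ setQ3 by auto
      then have xl: "x \<in> L (i - m)" using lvq[of m] by simp
      have "x \<in> set P1 \<or> x = b' \<or> x \<in> set P2m" using xR by auto
      then show False
      proof (elim disjE)
        assume "x \<in> set P1"
        then obtain j where "j \<le> n" "x = f j" using setP1 by auto
        then have "x \<in> L i \<union> L (Suc i)" using fL by simp
        then show False using notlow[of x m] m(1) xl by auto
      next
        assume "x = b'"
        then show False using notlow[of x m] m(1) xl b'L by auto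
      next
        assume "x \<in> set P2m"
        then obtain l where l: "l \<in> {1..<s}" "x = (par ^^ l) b'" using setP2m by auto
        then have "x \<in> L (i - l)" using lvb[of l] by simp
        then have "i - l = i - m" using xl L_unique by blast
        then have lm: "l = m" using l(1) m(1) smu(1) by auto
        have "(par ^^ (s - 1)) q = (par ^^ (s - 1 - m)) ((par ^^ m) q)"
          using parn_add[of "s - 1 - m" m q] l(1) lm by simp
        also have "\<dots> = (par ^^ (s - 1 - m)) ((par ^^ m) b')" using m(2) l(2) lm by simp
        also have "\<dots> = (par ^^ (s - 1)) b'"
          using parn_add[of "s - 1 - m" m b'] l(1) lm by simp
        finally show False using b'ne by simp
      qed
    qed
    then show ?thesis by blast
  qed
  have dist: "distinct cs" unfolding cs_def using D1 D2 D3 D4 D5 D6 by simp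
  let ?adj = "\<lambda>u w. {u,w} \<in> F"
  have S1: "successively ?adj Q3" unfolding Q3_def
  proof (rule succ_upt, intro allI impI)
    fix j assume "0 \<le> j" "Suc j < s"
    then have e: "{(par ^^ (s - Suc j)) q, (par ^^ Suc (s - Suc j)) q} \<in> F"
      using parn_edge[OF qL, of "s - Suc j"] smu(1) by simp
    have "s - j = Suc (s - Suc j)" using \<open>Suc j < s\<close> by simp
    then show "{(par ^^ (s - j)) q, (par ^^ (s - Suc j)) q} \<in> F" using e by (simp add: insert_commute)
  qed
  have S2: "successively ?adj P1" unfolding P1_def
  proof (rule succ_upt, intro allI impI)
    fix j assume "0 \<le> j" "Suc j < Suc n"
    then have e: "{f (n - Suc j), f (Suc (n - Suc j))} \<in> F" using fE by simp
    have "n - j = Suc (n - Suc j)" using \<open>Suc j < Suc n\<close> by simp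
    then show "{f (n - j), f (n - Suc j)} \<in> F" using e by (simp add: insert_commute)
  qed
  have S3: "successively ?adj P2" unfolding P2_def
  proof (rule succ_upt, intro allI impI)
    fix j assume "1 \<le> j" "Suc j < Suc s"
    then show "{(par ^^ j) b', (par ^^ Suc j) b'} \<in> F" using parn_edge[OF b'L, of j] smu(1) by simp
  qed
  have lastQ3: "last Q3 = par q" unfolding Q3_def using s_pos by (simp add: last_map)
  have hdP1: "hd P1 = q" unfolding P1_def q_def by (simp add: hd_map del: upt_Suc)
  have lastP1: "last P1 = y1" unfolding P1_def using f0 by (simp add: last_map)
  have hdP2: "hd P2 = par b'" unfolding P2_def using s_pos by (simp add: hd_map del: upt_Suc)
  have e1: "{par q, q} \<in> F" using parn_edge[OF qL, of 0] s_pos smu(1) by (simp add: insert_commute)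
  have e2: "{b', par b'} \<in> F" using parn_edge[OF b'L, of 0] s_pos smu(1) by simp
  have P1ne: "P1 \<noteq> []" unfolding P1_def by simp
  have P2ne: "P2 \<noteq> []" unfolding P2_def using s_pos by simp
  have "successively ?adj ([b'] @ P2)"
    using S3 e2 hdP2 P2ne by (simp add: successively_Cons)
  then have "successively ?adj (P1 @ [b'] @ P2)"
    using S2 lastP1 b'e P1ne by (simp only: successively_append_iff) simp
  then have "successively ?adj (Q3 @ P1 @ [b'] @ P2)"
    using S1 lastQ3 hdP1 e1 Q3ne P1ne by (simp only: successively_append_iff) (simp add: insert_commute)
  then have "successively ?adj (cs @ [hd cs])" using csz by simp
  moreover have "2 * k \<ge> 3" using k2 by simp
  ultimately have "has_circuit_of_length F (2 * k)" using cycle_circuit[OF dist len] by blast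
  then show False using noc by blast
qed

end


lemma growth_real:
  fixes x :: "nat \<Rightarrow> real" and g :: real
  assumes g: "g \<ge> 2" and x0: "x 0 = 1" and x1: "x 1 \<ge> g - 1"
    and rec: "\<And>i. 1 \<le> i \<Longrightarrow> i < k \<Longrightarrow> x (Suc i) \<ge> g * x i - x (i - 1)"
    and pos: "\<And>i. x i \<ge> 0"
  shows "x k \<ge> (g - 1) ^ k"
proof -
  have ratio: "1 \<le> i \<longrightarrow> i \<le> k \<longrightarrow> x i \<ge> (g - 1) * x (i - 1)" for i
  proof (induction i)
    case 0 then show ?case by simp
  next
    case (Suc i)
    show ?case
    proof (intro impI)
      assume h: "1 \<le> Suc i" "Suc i \<le> k"
      show "x (Suc i) \<ge> (g - 1) * x (Suc i - 1)"
      proof (cases "i = 0")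
        case True then show ?thesis using x0 x1 by simp
      next
        case False
        then have IH: "x i \<ge> (g - 1) * x (i - 1)" using Suc.IH h by simp
        have "1 * x (i - 1) \<le> (g - 1) * x (i - 1)" using g pos[of "i - 1"] by (intro mult_right_mono) auto
        then have "x (i - 1) \<le> x i" using IH by simp
        moreover have "x (Suc i) \<ge> g * x i - x (i - 1)" using rec[of i] False h by simp
        ultimately show ?thesis by (simp add: algebra_simps)
      qed
    qed
  qed
  have pw: "i \<le> k \<longrightarrow> x i \<ge> (g - 1) ^ i" for i
  proof (induction i)
    case 0 then show ?case using x0 by simp
  next
    case (Suc i)
    show ?case
    proof
      assume h: "Suc i \<le> k"
      then have "x i \<ge> (g - 1) ^ i" using Suc.IH by simp
      then have "(g - 1) * (g - 1) ^ i \<le> (g - 1) * x i" using g by (intro mult_left_mono) auto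
      moreover have "x (Suc i) \<ge> (g - 1) * x i" using ratio[of "Suc i"] h by simp
      ultimately show "x (Suc i) \<ge> (g - 1) ^ Suc i" by simp
    qed
  qed
  then show ?thesis by simp
qed

lemma root_le:
  fixes a m :: real
  assumes "a > 0" "a ^ k \<le> m" "k > 0"
  shows "a \<le> m powr (1 / real k)"
proof -
  have "a = (a powr real k) powr (1 / real k)" using assms(1,3) by (simp add: powr_powr)
  also have "\<dots> = (a ^ k) powr (1 / real k)" using assms(1) by (simp add: powr_realpow)
  also have "\<dots> \<le> m powr (1 / real k)" using assms by (intro powr_mono2) auto
  finally show ?thesis .
qed

locale bfsd = bfs +
  fixes d :: nat
  assumes mindeg: "\<forall>x\<in>W. d \<le> card (nbr F W x)"
    and rside: "r \<in> X \<longleftrightarrow> even k"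
    and finX: "finite X"
begin

lemma L_disj: "a \<noteq> b \<Longrightarrow> L a \<inter> L b = {}"
proof -
  assume ab: "a \<noteq> b"
  have False if "x \<in> L a" "x \<in> L b" for x using L_unique[OF that] ab by simp
  then show ?thesis by blast
qed

lemma layer_edges:
  assumes j: "j < k"
  shows "card (edges_in F (L j \<union> L (Suc j))) \<le> (2*k - 1) * (card (L j) + card (L (Suc j)))"
proof (rule ccontr)
  assume h: "\<not> ?thesis"
  have disjL: "L j \<inter> L (Suc j) = {}"
  proof -
    have False if "x \<in> L j" "x \<in> L (Suc j)" for x
    proof -
      have "j = Suc j" using L_unique[OF that] .
      then show False by simp
    qed
    then show ?thesis by blast
  qed
  have cu: "card (L j \<union> L (Suc j)) = card (L j) + card (L (Suc j))"
    using card_Un_disjoint[OF finL finL disjL] .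
  have lt: "(2*k - 1) * card (L j \<union> L (Suc j)) < card (edges_in F (L j \<union> L (Suc j)))"
    using h cu by simp
  have fin: "finite (L j \<union> L (Suc j))" using finL by simp
  have "\<exists>W'\<subseteq>L j \<union> L (Suc j). W' \<noteq> {} \<and> (\<forall>x\<in>W'. 2*k \<le> card (nbr F W' x))"
    by (rule extract_sub[OF fin card_edges]) (use lt in simp)
  then obtain W' where W': "W' \<subseteq> L j \<union> L (Suc j)" "W' \<noteq> {}" "\<forall>x\<in>W'. 2*k \<le> card (nbr F W' x)"
    by blast
  show False by (rule core[OF j W'])
qed

lemma growth:
  assumes i: "1 \<le> i" "i < k"
  shows "d * card (L i) \<le> (2*k-1) * (card (L (i-1)) + 2 * card (L i) + card (L (Suc i)))"
proof -
  have fn: "finite (nbr F A x)" if "finite A" for A x using that unfolding nbr_def by auto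
  have pt: "d \<le> card (nbr F (L (i-1)) x) + card (nbr F (L (Suc i)) x)" if x: "x \<in> L i" for x
  proof -
    have "nbr F W x \<subseteq> nbr F (L (i-1)) x \<union> nbr F (L (Suc i)) x"
    proof
      fix w assume "w \<in> nbr F W x"
      then have "w \<in> W" "{x,w} \<in> F" unfolding nbr_def by auto
      then have "w \<in> L (Suc i) \<or> w \<in> L (i - 1)" using L_nbr[OF x] by blast
      then show "w \<in> nbr F (L (i-1)) x \<union> nbr F (L (Suc i)) x"
        using \<open>{x,w} \<in> F\<close> unfolding nbr_def by auto
    qed
    then have "card (nbr F W x) \<le> card (nbr F (L (i-1)) x \<union> nbr F (L (Suc i)) x)"
      using fn finL by (intro card_mono) auto
    also have "\<dots> \<le> card (nbr F (L (i-1)) x) + card (nbr F (L (Suc i)) x)" by (rule card_Un_le)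
    finally have "card (nbr F W x) \<le> card (nbr F (L (i-1)) x) + card (nbr F (L (Suc i)) x)" .
    moreover have "x \<in> W" using x L_W by blast
    then have "d \<le> card (nbr F W x)" using mindeg by blast
    ultimately show ?thesis by linarith
  qed
  have "d * card (L i) = (\<Sum>x\<in>L i. d)" by simp
  also have "\<dots> \<le> (\<Sum>x\<in>L i. card (nbr F (L (i-1)) x) + card (nbr F (L (Suc i)) x))"
    using pt by (rule sum_mono)
  also have "\<dots> = card (Sigma (L i) (nbr F (L (i-1)))) + card (Sigma (L i) (nbr F (L (Suc i))))"
    using finL fn by (simp add: sum.distrib)
  also have "\<dots> \<le> card (edges_in F (L i \<union> L (i-1))) + card (edges_in F (L i \<union> L (Suc i)))"
  proof (rule add_mono)
    show "card (Sigma (L i) (nbr F (L (i-1)))) \<le> card (edges_in F (L i \<union> L (i-1)))"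
      by (rule sigma_le_edges) (use finL L_disj i in auto)
    show "card (Sigma (L i) (nbr F (L (Suc i)))) \<le> card (edges_in F (L i \<union> L (Suc i)))"
      by (rule sigma_le_edges) (use finL L_disj in auto)
  qed
  also have "\<dots> \<le> (2*k-1) * (card (L (i-1)) + card (L i)) + (2*k-1) * (card (L i) + card (L (Suc i)))"
  proof (rule add_mono)
    have "L i \<union> L (i-1) = L (i-1) \<union> L (Suc (i-1))" using i by (simp add: Un_commute)
    then show "card (edges_in F (L i \<union> L (i-1))) \<le> (2*k-1) * (card (L (i-1)) + card (L i))"
      using layer_edges[of "i-1"] i by simp
    show "card (edges_in F (L i \<union> L (Suc i))) \<le> (2*k-1) * (card (L i) + card (L (Suc i)))"
      using layer_edges[of i] i by simp
  qed
  also have "\<dots> = (2*k-1) * (card (L (i-1)) + 2 * card (L i) + card (L (Suc i)))"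
    by (simp add: algebra_simps)
  finally show ?thesis .
qed

lemma L1: "d \<le> card (L 1)"
proof -
  have "nbr F W r \<subseteq> L 1"
  proof
    fix w assume "w \<in> nbr F W r"
    then have "w \<in> W" "{r,w} \<in> F" unfolding nbr_def by auto
    then show "w \<in> L 1" using L_nbr[of r 0 w] L0 by auto
  qed
  then have "card (nbr F W r) \<le> card (L 1)" using finL by (intro card_mono) auto
  moreover have "d \<le> card (nbr F W r)" using mindeg rW by blast
  ultimately show ?thesis by linarith
qed

lemma Lk: "card (L k) \<le> card X"
proof -
  have "L k \<subseteq> X" using side rside by blast
  then show ?thesis using finX by (intro card_mono) auto
qed

lemma deg_bound: "real d \<le> real (2*k-1) * (real (card X) powr (1 / real k) + 3)"
proof (cases "d = 0")
  case True then show ?thesis by simp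
next
  case False
  define K0 where "K0 = real (2*k-1)"
  have K0: "K0 \<ge> 1" unfolding K0_def using k2 by simp
  have "nbr F W r \<noteq> {}" using mindeg rW False by (metis card.empty le_zero_eq)
  then obtain w where "{r,w} \<in> F" unfolding nbr_def by auto
  then have "r \<in> X \<or> w \<in> X" using edge_sides by blast
  then have "X \<noteq> {}" by auto
  then have "card X \<ge> 1" using finX by (simp add: Suc_le_eq card_gt_0_iff)
  then have m1: "real (card X) powr (1 / real k) \<ge> 1" by (intro ge_one_powr_ge_zero) auto
  define g where "g = real d / K0 - 2"
  show ?thesis
  proof (cases "g \<ge> 2")
    case False
    then have "real d / K0 < 4" unfolding g_def by simp
    then have "real d < 4 * K0" using K0 by (simp add: divide_less_eq)
    moreover have "K0 * 4 \<le> K0 * (real (card X) powr (1 / real k) + 3)"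
      using m1 K0 by (intro mult_left_mono) auto
    ultimately show ?thesis unfolding K0_def by linarith
  next
    case True
    define x where "x = (\<lambda>i. real (card (L i)))"
    have x0: "x 0 = 1" unfolding x_def L0 by simp
    have "real d * 1 \<le> real d * K0" using K0 by (intro mult_left_mono) auto
    then have "real d / K0 \<le> real d" using K0 by (simp add: divide_le_eq)
    then have x1: "x 1 \<ge> g - 1" unfolding x_def g_def using L1 by simp
    have rec: "x (Suc i) \<ge> g * x i - x (i - 1)" if "1 \<le> i" "i < k" for i
    proof -
      have "real (d * card (L i)) \<le> real ((2*k-1) * (card (L (i-1)) + 2 * card (L i) + card (L (Suc i))))"
        using growth[OF that] by (simp only: of_nat_le_iff)
      then have "real d * x i \<le> K0 * (x (i-1) + 2 * x i + x (Suc i))"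
        unfolding x_def K0_def by simp
      then have "real d * x i / K0 \<le> x (i-1) + 2 * x i + x (Suc i)"
        using K0 by (simp add: pos_divide_le_eq mult.commute)
      moreover have "g * x i = real d * x i / K0 - 2 * x i" unfolding g_def by (simp add: algebra_simps)
      ultimately show ?thesis by simp
    qed
    have "x k \<ge> (g - 1) ^ k"
      by (rule growth_real[OF True x0 x1 rec]) (auto simp: x_def)
    then have "(g - 1) ^ k \<le> real (card X)" using Lk unfolding x_def by (meson of_nat_le_iff order_trans)
    then have "g - 1 \<le> real (card X) powr (1 / real k)" using True k2 by (intro root_le) auto
    then have "real d / K0 \<le> real (card X) powr (1 / real k) + 3" unfolding g_def by simp
    then have "real d \<le> (real (card X) powr (1 / real k) + 3) * K0" using K0 by (simp add: divide_le_eq)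
    then show ?thesis unfolding K0_def by (simp only: mult.commute)
  qed
qed

end


lemma bip_bound:
  fixes E :: "'a set set" and X Y V :: "'a set"
  assumes finV: "finite V" and XY: "X \<union> Y = V" and disj: "X \<inter> Y = {}"
    and bip: "\<forall>e\<in>E. \<exists>x\<in>X. \<exists>y\<in>Y. e = {x,y}"
    and noc: "\<not> has_circuit_of_length E (2*k)" and k2: "2 \<le> k"
  shows "real (card E) \<le> real (2*k-1) * (real (card X) powr (1 / real k) + 3) * real (card V)"
proof (rule ccontr)
  define K where "K = real (2*k-1) * (real (card X) powr (1 / real k) + 3)"
  assume "\<not> ?thesis"
  then have gt: "K * real (card V) < real (card E)" unfolding K_def by simp
  have Kpos: "K \<ge> 0" unfolding K_def by simp
  have EV: "\<forall>e\<in>E. e \<subseteq> V"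
  proof
    fix e assume "e \<in> E"
    then obtain x y where "x \<in> X" "y \<in> Y" "e = {x,y}" using bip by blast
    then show "e \<subseteq> V" using XY by auto
  qed
  have "0 \<le> K * real (card V)" using Kpos by simp
  then have "card E \<noteq> 0" using gt by linarith
  then have "E \<noteq> {}" by (intro notI) simp
  then obtain e where "e \<in> E" by blast
  then obtain x y where "x \<in> X" "y \<in> Y" "e = {x,y}" using bip by blast
  then have "V \<noteq> {}" using XY by blast
  then have vpos: "card V > 0" using finV by (simp add: card_gt_0_iff)
  define v where "v = real (card V)"
  have v0: "v > 0" unfolding v_def using vpos by simp
  define d where "d = nat \<lceil>real (card E) / v\<rceil>"
  have q0: "real (card E) / v > 0" using \<open>card E \<noteq> 0\<close> v0 by simp
  have c0: "0 \<le> \<lceil>real (card E) / v\<rceil>" using q0 by simp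
  have rd: "real d = real_of_int \<lceil>real (card E) / v\<rceil>" unfolding d_def using c0 by simp
  have dge: "real d \<ge> real (card E) / v" using rd ceiling_correct[of "real (card E) / v"] by simp
  have "real d - 1 < real (card E) / v" using rd ceiling_correct[of "real (card E) / v"] by simp
  moreover have d1: "d \<ge> 1"
  proof -
    have "real d > 0" using dge q0 by linarith
    then show ?thesis by simp
  qed
  ultimately have "real (d - 1) < real (card E) / v" by (simp add: of_nat_diff)
  then have "real (d - 1) * v < real (card E)" using v0 by (simp add: pos_less_divide_eq)
  moreover have "real ((d - 1) * card V) = real (d - 1) * v" unfolding v_def by (simp only: of_nat_mult)
  ultimately have "real ((d - 1) * card V) < real (card E)" by (simp only:)
  then have "(d - 1) * card V < card E" by (simp only: of_nat_less_iff)
  moreover have "edges_in E V = E" using EV unfolding edges_in_def by auto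
  ultimately have lt: "(d - 1) * card V < card (edges_in E V)" by simp
  have ce: "\<forall>e\<in>E. card e = 2"
  proof
    fix e assume "e \<in> E"
    then obtain x y where "x \<in> X" "y \<in> Y" "e = {x,y}" using bip by blast
    moreover have "x \<noteq> y" using calculation disj by blast
    ultimately show "card e = 2" by simp
  qed
  have "\<exists>W\<subseteq>V. W \<noteq> {} \<and> (\<forall>x\<in>W. d \<le> card (nbr E W x))"
    by (rule extract_sub[OF finV ce lt])
  then obtain W where W: "W \<subseteq> V" "W \<noteq> {}" "\<forall>x\<in>W. d \<le> card (nbr E W x)" by blast
  obtain w where w: "w \<in> W" using W(2) by blast
  have "d \<le> card (nbr E W w)" using W(3) w by blast
  then have "card (nbr E W w) \<noteq> 0" using d1 by linarith
  then have "nbr E W w \<noteq> {}" by (intro notI) simp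
  then obtain w' where w': "w' \<in> W" "{w,w'} \<in> E" unfolding nbr_def by auto
  obtain x y where "x \<in> X" "y \<in> Y" "{w,w'} = {x,y}" using bip w'(2) by blast
  then have sides: "(w \<in> X \<and> w' \<in> Y) \<or> (w \<in> Y \<and> w' \<in> X)" by (auto simp: doubleton_eq_iff)
  obtain r where r: "r \<in> W" "r \<in> X \<longleftrightarrow> even k"
  proof (cases "w \<in> X \<longleftrightarrow> even k")
    case True then show ?thesis using that w by blast
  next
    case False
    then have "w' \<in> X \<longleftrightarrow> even k" using sides disj by blast
    then show ?thesis using that w' by blast
  qed
  have finX: "finite X" using finV XY by auto
  interpret bfsd E X Y W r k d
  proof
    show "finite W" using W(1) finV finite_subset by blast
    show "\<forall>e\<in>E. \<exists>x\<in>X. \<exists>y\<in>Y. e = {x, y}" by (rule bip)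
    show "X \<inter> Y = {}" by (rule disj)
    show "W \<subseteq> X \<union> Y" using W(1) XY by simp
    show "r \<in> W" by (rule r(1))
    show "\<not> has_circuit_of_length E (2 * k)" by (rule noc)
    show "2 \<le> k" by (rule k2)
    show "\<forall>x\<in>W. d \<le> card (nbr E W x)" by (rule W(3))
    show "(r \<in> X) = even k" by (rule r(2))
    show "finite X" by (rule finX)
  qed
  have "real d \<le> K" using deg_bound unfolding K_def .
  moreover have "K < real (card E) / v" using gt v0 unfolding v_def by (simp add: pos_less_divide_eq)
  ultimately show False using dge by linarith
qed


lemma pi_sq: "pi\<^sup>2 \<ge> 4"
proof -
  have "2 * 2 \<le> pi * pi" using pi_ge_two by (intro mult_mono) auto
  then show ?thesis by (simp add: power2_eq_square)
qed

lemma bip_part: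
  fixes E :: "'a set set" and X Y V :: "'a set"
  assumes finV: "finite V" and XY: "X \<union> Y = V" and disj: "X \<inter> Y = {}"
    and bip: "\<forall>e\<in>E. \<exists>x\<in>X. \<exists>y\<in>Y. e = {x,y}"
    and noc: "\<not> has_circuit_of_length E (2*k)" and k2: "2 \<le> k"
    and le: "card X \<le> card Y"
  shows "real (card E) \<le> 9 * pi\<^sup>2 * (real (2*k))\<^sup>2 * real (card X) powr (1 / real k) * real (card Y)"
proof (cases "card X = 0")
  case True
  have "X = {}" using True finV XY by auto
  then have "E = {}" using bip by auto
  then show ?thesis by simp
next
  case False
  define P where "P = real (card X) powr (1 / real k)"
  define K0 where "K0 = real (2*k-1)"
  define n where "n = real (card Y)"
  have P1: "P \<ge> 1" unfolding P_def using False by (intro ge_one_powr_ge_zero) auto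
  have K0: "K0 \<ge> 0" "K0 \<le> 2 * real k" unfolding K0_def using k2 by auto
  have cV: "card V = card X + card Y" using card_Un_disjoint[of X Y] finV XY disj by auto
  have vn: "real (card V) \<le> 2 * n" unfolding n_def using cV le by simp
  have "real (card E) \<le> K0 * (P + 3) * real (card V)"
    using bip_bound[OF finV XY disj bip noc k2] unfolding K0_def P_def by simp
  also have "\<dots> \<le> K0 * (4 * P) * (2 * n)"
    using K0 P1 vn by (intro mult_mono) auto
  also have "\<dots> = (8 * K0) * (P * n)" by (simp add: algebra_simps)
  also have "\<dots> \<le> (36 * pi\<^sup>2 * (real k)\<^sup>2) * (P * n)"
  proof (rule mult_right_mono)
    have "8 * K0 \<le> 16 * real k" using K0 by simp
    also have "\<dots> \<le> 144 * (real k)\<^sup>2" using k2 by (simp add: power2_eq_square)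
    also have "\<dots> \<le> 36 * pi\<^sup>2 * (real k)\<^sup>2" using pi_sq by (intro mult_right_mono mult_left_mono) auto
    finally show "8 * K0 \<le> 36 * pi\<^sup>2 * (real k)\<^sup>2" .
    show "0 \<le> P * n" using P1 unfolding n_def by simp
  qed
  also have "\<dots> = 9 * pi\<^sup>2 * (real (2*k))\<^sup>2 * P * n" by (simp add: power2_eq_square)
  finally show ?thesis unfolding P_def n_def .
qed

theorem theorem5p1:
  fixes V :: "'a set" and E :: "'a set set" and p :: nat
  assumes "p \<ge> 4" and "even p"
    and "simple_graph V E" and "V \<noteq> {}"
    and "\<not> has_circuit_of_length E p"
  shows "real (card E) \<le> 18 * pi\<^sup>2 * (real p)\<^sup>2 * real (card V) powr (1 + 2 / real p)
         \<and> (\<forall>A B. bipartition V E A B \<longrightarrow>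
              real (card E) \<le> 9 * pi\<^sup>2 * (real p)\<^sup>2
                 * real (min (card A) (card B)) powr (2 / real p)
                 * real (max (card A) (card B)))"
proof -
  obtain k where p: "p = 2 * k" using assms(2) by (auto elim: evenE)
  have k2: "2 \<le> k" using assms(1) p by simp
  have noc: "\<not> has_circuit_of_length E (2*k)" using assms(5) p by simp
  have finV: "finite V" and Ed: "\<forall>e\<in>E. e \<subseteq> V \<and> card e = 2"
    using assms(3) unfolding simple_graph_def by auto
  have pk: "2 / real p = 1 / real k" unfolding p by simp
  have part1: "real (card E) \<le> 18 * pi\<^sup>2 * (real p)\<^sup>2 * real (card V) powr (1 + 2 / real p)"
  proof -
    obtain A where A: "A \<subseteq> V" "card E \<le> 2 * card (cross E A)" using maxcut[OF finV Ed] by blast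
    define H where "H = cross E A"
    have HE: "H \<subseteq> E" unfolding H_def cross_def by auto
    have bipH: "\<forall>e\<in>H. \<exists>x\<in>A. \<exists>y\<in>V - A. e = {x,y}"
    proof
      fix e assume "e \<in> H"
      then have e: "e \<in> E" "card (e \<inter> A) = 1" unfolding H_def cross_def by auto
      then have "e \<subseteq> V" "card e = 2" using Ed by auto
      then obtain a b where ab: "e = {a,b}" "a \<noteq> b" unfolding card_2_iff by blast
      show "\<exists>x\<in>A. \<exists>y\<in>V - A. e = {x,y}"
      proof (cases "a \<in> A")
        case True
        have "b \<notin> A"
        proof
          assume "b \<in> A"
          then have "e \<inter> A = {a,b}" using True ab by auto
          then show False using e(2) ab by simp
        qed
        then show ?thesis using True ab \<open>e \<subseteq> V\<close> by auto
      next
        case False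
        have "b \<in> A"
        proof (rule ccontr)
          assume "b \<notin> A"
          then have "e \<inter> A = {}" using False ab by auto
          then show False using e(2) by simp
        qed
        then have "e = {b,a}" using ab by auto
        then show ?thesis using False \<open>b \<in> A\<close> \<open>e \<subseteq> V\<close> ab by blast
      qed
    qed
    have nocH: "\<not> has_circuit_of_length H (2*k)" using noc circuit_mono HE by blast
    have AV: "A \<union> (V - A) = V" "A \<inter> (V - A) = {}" using A(1) by auto
    have bH: "real (card H) \<le> real (2*k-1) * (real (card A) powr (1 / real k) + 3) * real (card V)"
      by (rule bip_bound[OF finV AV bipH nocH k2])
    define v where "v = real (card V)"
    define P where "P = v powr (1 / real k)"
    have v1: "v \<ge> 1" unfolding v_def using assms(4) finV by (simp add: Suc_le_eq card_gt_0_iff)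
    have P1: "P \<ge> 1" unfolding P_def using v1 by (intro ge_one_powr_ge_zero) auto
    have cA: "real (card A) \<le> v" unfolding v_def using A(1) finV by (simp add: card_mono)
    have PA: "real (card A) powr (1 / real k) \<le> P" unfolding P_def using cA by (intro powr_mono2) auto
    define K0 where "K0 = real (2*k-1)"
    have K0: "K0 \<ge> 0" "K0 \<le> 2 * real k" unfolding K0_def using k2 by auto
    have "real (card E) \<le> 2 * real (card H)" using A(2) unfolding H_def by simp
    also have "\<dots> \<le> 2 * (K0 * (real (card A) powr (1 / real k) + 3) * v)"
      using bH unfolding K0_def v_def by simp
    also have "\<dots> \<le> 2 * (K0 * (4 * P) * v)"
      using K0 PA P1 v1 by (intro mult_left_mono mult_right_mono) auto
    also have "\<dots> = (8 * K0) * (v * P)" by (simp add: algebra_simps)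
    also have "\<dots> \<le> (72 * pi\<^sup>2 * (real k)\<^sup>2) * (v * P)"
    proof (rule mult_right_mono)
      have "8 * K0 \<le> 16 * real k" using K0 by simp
      also have "\<dots> \<le> 288 * (real k)\<^sup>2" using k2 by (simp add: power2_eq_square)
      also have "\<dots> \<le> 72 * pi\<^sup>2 * (real k)\<^sup>2" using pi_sq by (intro mult_right_mono mult_left_mono) auto
      finally show "8 * K0 \<le> 72 * pi\<^sup>2 * (real k)\<^sup>2" .
      show "0 \<le> v * P" using v1 P1 by simp
    qed
    also have "\<dots> = 18 * pi\<^sup>2 * (real p)\<^sup>2 * v powr (1 + 2 / real p)"
    proof -
      have "v powr (1 + 2 / real p) = v * P" unfolding pk P_def using v1 by (simp add: powr_add)
      then show ?thesis unfolding p by (simp add: power2_eq_square)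
    qed
    finally show ?thesis unfolding v_def .
  qed
  have part2: "real (card E) \<le> 9 * pi\<^sup>2 * (real p)\<^sup>2
                 * real (min (card A) (card B)) powr (2 / real p)
                 * real (max (card A) (card B))" if bp: "bipartition V E A B" for A B
  proof -
    have AB: "A \<union> B = V" "A \<inter> B = {}" "\<forall>e\<in>E. \<exists>a\<in>A. \<exists>b\<in>B. e = {a, b}"
      using bp unfolding bipartition_def by auto
    show ?thesis
    proof (cases "card A \<le> card B")
      case True
      have "real (card E) \<le> 9 * pi\<^sup>2 * (real (2*k))\<^sup>2 * real (card A) powr (1 / real k) * real (card B)"
        by (rule bip_part[OF finV AB noc k2 True])
      then show ?thesis using True unfolding pk p by simp
    next
      case False
      have BA: "B \<union> A = V" "B \<inter> A = {}" using AB by auto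
      have bBA: "\<forall>e\<in>E. \<exists>b\<in>B. \<exists>a\<in>A. e = {b, a}"
      proof
        fix e assume "e \<in> E"
        then obtain a b where ab: "a \<in> A" "b \<in> B" "e = {a,b}" using AB(3) by blast
        then have "e = {b,a}" by (simp add: insert_commute)
        then show "\<exists>b\<in>B. \<exists>a\<in>A. e = {b, a}" using ab by blast
      qed
      have le: "card B \<le> card A" using False by simp
      have "real (card E) \<le> 9 * pi\<^sup>2 * (real (2*k))\<^sup>2 * real (card B) powr (1 / real k) * real (card A)"
        by (rule bip_part[OF finV BA bBA noc k2 le])
      then show ?thesis using le False unfolding pk p by simp
    qed
  qed
  show ?thesis using part1 part2 by blast
qed


end
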